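(* For all rooted trees $u,v$ there exist a vector field $f$ and a quadratic functional $F$ on $Y=\mathbb R^{|u|+|v|}$ such that, for all rooted trees $\tau,\theta$, $F''\bigl(\tau(f)(0),\theta(f)(0)\bigr)\ne0$ if $(\tau,\theta)=(u,v)$ or $(\tau,\theta)=(v,u)$, and $F''\bigl(\tau(f)(0),\theta(f)(0)\bigr)=0$ otherwise.
   Context: Rooted trees: $\bullet$ is the one-vertex tree and $[\tau_1,\ldots,\tau_m]$ is the tree whose root has children that are the roots of subtrees $\tau_1,\ldots,\tau_m$ (unordered); $|\tau|$ is the number of vertices. Elementary differentials of a smooth vector field $f$: $\bullet(f)=f$, $[\tau_1,\ldots,\tau_m](f)=f^{(m)}\bigl(\tau_1(f),\ldots,\tau_m(f)\bigr)$ with $f^{(m)}$ the $m$-th derivative. A quadratic functional is a homogeneous quadratic polynomial $F\colon Y\to\mathbb R$; its Hessian $F''$ is a constant symmetric bilinear form. *)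

theory Defs
  imports "HOL-Analysis.Analysis" "HOL-Library.Multiset" "HOL-Combinatorics.Multiset_Permutations"
begin

(* Unordered rooted trees: a node with a multiset of children.
   Node {#} is the one-vertex tree, Node {#t1,...,tm#} is [t1,...,tm]. *)
datatype tree = Node "tree multiset"

primrec tsize :: "tree \<Rightarrow> nat" where
  "tsize (Node M) = 1 + sum_mset (image_mset tsize M)"

definition ddir :: "('a::real_normed_vector \<Rightarrow> 'b::real_normed_vector) \<Rightarrow> 'a \<Rightarrow> 'a \<Rightarrow> 'b" where
  "ddir g v = (\<lambda>x. frechet_derivative g (at x) v)"

(* iterated derivative: nderiv f [v1,...,vm] x = f^(m)(x)(v1,...,vm) *)
fun nderiv :: "('a::real_normed_vector \<Rightarrow> 'b::real_normed_vector) \<Rightarrow> 'a list \<Rightarrow> 'a \<Rightarrow> 'b" where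
  "nderiv f [] = f"
| "nderiv f (v # vs) = ddir (nderiv f vs) v"

definition smooth :: "('a::real_normed_vector \<Rightarrow> 'b::real_normed_vector) \<Rightarrow> bool" where
  "smooth f \<longleftrightarrow> (\<forall>vs x. nderiv f vs differentiable (at x))"

(* m-th derivative applied to an (unordered) multiset of arguments; for smooth f the
   derivative is symmetric, so this average over orderings equals f^(m)(x)(v1,...,vm) *)
definition mderiv :: "('a::real_normed_vector \<Rightarrow> 'b::real_normed_vector) \<Rightarrow> 'a \<Rightarrow> 'a multiset \<Rightarrow> 'b" where
  "mderiv f x M = scaleR (1 / real (card (permutations_of_multiset M)))
                    (\<Sum>L\<in>permutations_of_multiset M. nderiv f L x)"

primrec elem_diff :: "tree \<Rightarrow> ('a::real_normed_vector \<Rightarrow> 'a) \<Rightarrow> 'a \<Rightarrow> 'a" where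
  "elem_diff (Node M) f x = mderiv f x (image_mset (\<lambda>t. elem_diff t f x) M)"

definition quadratic_functional :: "(real ^ 'n \<Rightarrow> real) \<Rightarrow> bool" where
  "quadratic_functional F \<longleftrightarrow> (\<exists>A :: 'n \<Rightarrow> 'n \<Rightarrow> real. \<forall>y. F y = (\<Sum>i\<in>UNIV. \<Sum>j\<in>UNIV. A i j * y$i * y$j))"

(* Hessian F''(a,b) (constant for a quadratic functional; evaluated at 0) *)
definition hessian :: "(real ^ 'n \<Rightarrow> real) \<Rightarrow> real ^ 'n \<Rightarrow> real ^ 'n \<Rightarrow> real" where
  "hessian F a b = nderiv F [a, b] 0"

end

theory Submission
  imports Defs
begin


definition mon :: "'n multiset \<Rightarrow> real ^ 'n \<Rightarrow> real" where
  "mon B x = prod_mset (image_mset (\<lambda>i. x $ i) B)"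

definition dmon :: "'n multiset \<Rightarrow> real ^ 'n \<Rightarrow> real ^ 'n \<Rightarrow> real" where
  "dmon B x h = sum_mset (image_mset (\<lambda>i. h $ i * mon (B - {#i#}) x) B)"

lemma X: "j \<in># B \<Longrightarrow> add_mset i B - {#j#} = add_mset i (B - {#j#})"
  by (simp add: diff_union_single_conv)  
lemma dmon_add: "dmon (add_mset i B) x h = h $ i * mon B x + x $ i * dmon B x h"
proof -
  have "image_mset (\<lambda>j. h $ j * mon (add_mset i B - {#j#}) x) B
      = image_mset (\<lambda>j. x $ i * (h $ j * mon (B - {#j#}) x)) B"
  proof (rule image_mset_cong)
    fix j assume "j \<in># B"
    then have "add_mset i B - {#j#} = add_mset i (B - {#j#})"
      by (rule X)
    then show "h $ j * mon (add_mset i B - {#j#}) x = x $ i * (h $ j * mon (B - {#j#}) x)"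
      by (simp add: mon_def)
  qed
  then show ?thesis
    unfolding dmon_def by (simp add: sum_mset_distrib_left mon_def)
qed

lemma mon_deriv: "(mon B has_derivative dmon B x) (at x)"
proof (induction B)
  case empty
  then show ?case by (simp add: mon_def dmon_def[abs_def])
next
  case (add i B)
  have e1: "mon (add_mset i B) = (\<lambda>y. y $ i * mon B y)"
    by (simp add: mon_def[abs_def])
  have e2: "dmon (add_mset i B) x = (\<lambda>h. x $ i * dmon B x h + h $ i * mon B x)"
    by (rule ext) (simp add: dmon_add)
  have d1: "((\<lambda>y. y $ i) has_derivative (\<lambda>h. h $ i)) (at x)"
    using bounded_linear_vec_nth by (rule bounded_linear_imp_has_derivative)
  show ?case unfolding e1 e2
    by (rule has_derivative_mult[OF d1 add.IH])
qed

definition pf :: "(real \<times> 'n multiset) multiset \<Rightarrow> real ^ 'n \<Rightarrow> real" where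
  "pf P x = sum_mset (image_mset (\<lambda>(c,B). c * mon B x) P)"

definition D :: "real ^ 'n \<Rightarrow> (real \<times> 'n multiset) multiset \<Rightarrow> (real \<times> 'n multiset) multiset" where
  "D w P = sum_mset (image_mset (\<lambda>(c,B). image_mset (\<lambda>i. (c * w $ i, B - {#i#})) B) P)"

lemma pf_empty[simp]: "pf {#} x = 0" by (simp add: pf_def)
lemma pf_add[simp]: "pf (add_mset (c,B) P) x = c * mon B x + pf P x" by (simp add: pf_def)
lemma pf_union[simp]: "pf (P + Q) x = pf P x + pf Q x" by (simp add: pf_def)

lemma pf_img: "pf (image_mset (\<lambda>i. (c * h $ i, B - {#i#})) B) x = c * dmon B x h"
  unfolding pf_def dmon_def by (simp add: sum_mset_distrib_left multiset.map_comp o_def mult.assoc)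

lemma D_empty[simp]: "D w {#} = {#}" by (simp add: D_def)
lemma D_add[simp]: "D w (add_mset (c,B) P) = image_mset (\<lambda>i. (c * w $ i, B - {#i#})) B + D w P"
  by (simp add: D_def)

lemma pf_D: "pf (D h P) x = sum_mset (image_mset (\<lambda>(c,B). c * dmon B x h) P)"
proof (induction P)
  case empty then show ?case by simp
next
  case (add a P)
  then show ?case by (cases a) (simp add: pf_img)
qed

lemma pf_deriv: "(pf P has_derivative (\<lambda>h. pf (D h P) x)) (at x)"
proof (induction P)
  case empty then show ?case by (simp add: pf_def[abs_def])
next
  case (add a P)
  obtain c B where a: "a = (c,B)" by (cases a)
  have e1: "pf (add_mset a P) = (\<lambda>y. c * mon B y + pf P y)" by (rule ext) (simp add: a)
  have e2: "(\<lambda>h. pf (D h (add_mset a P)) x) = (\<lambda>h. c * dmon B x h + pf (D h P) x)"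
    by (rule ext) (simp add: a pf_img)
  show ?case unfolding e1 e2
    by (intro has_derivative_add has_derivative_mult_right mon_deriv add.IH)
qed

lemma ddir_pf: "ddir (pf P) w = pf (D w P)"
  unfolding ddir_def
  by (rule ext) (simp add: frechet_derivative_at[OF pf_deriv, symmetric])

fun Dn :: "(real ^ 'n) list \<Rightarrow> (real \<times> 'n multiset) multiset \<Rightarrow> (real \<times> 'n multiset) multiset" where
  "Dn [] P = P"
| "Dn (w # ws) P = D w (Dn ws P)"

lemma nderiv_pf: "nderiv (pf P) ws = pf (Dn ws P)"
  by (induction ws) (simp_all add: ddir_pf)

definition fv :: "('n \<Rightarrow> (real \<times> 'n multiset) multiset) \<Rightarrow> real ^ 'n \<Rightarrow> real ^ 'n" where
  "fv Ps x = (\<chi> i. pf (Ps i) x)"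

lemma fv_deriv:
  fixes Ps :: "'n::finite \<Rightarrow> (real \<times> 'n multiset) multiset"
  shows "(fv Ps has_derivative (\<lambda>h. fv (\<lambda>i. D h (Ps i)) x)) (at x)"
proof -
  have "\<forall>b\<in>Basis. ((\<lambda>y. fv Ps y \<bullet> b) has_derivative (\<lambda>h. fv (\<lambda>i. D h (Ps i)) x \<bullet> b)) (at x)"
  proof
    fix b :: "real ^ 'n" assume "b \<in> Basis"
    then obtain j where b: "b = axis j 1" by (auto simp: Basis_vec_def)
    show "((\<lambda>y. fv Ps y \<bullet> b) has_derivative (\<lambda>h. fv (\<lambda>i. D h (Ps i)) x \<bullet> b)) (at x)"
      unfolding b inner_axis fv_def by (simp add: pf_deriv)
  qed
  then show ?thesis by (subst has_derivative_componentwise_within) 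
qed

lemma ddir_fv: "ddir (fv Ps) w = fv (\<lambda>i. D w (Ps i))"
  unfolding ddir_def
  by (rule ext) (simp add: frechet_derivative_at[OF fv_deriv, symmetric])

lemma nderiv_fv: "nderiv (fv Ps) ws = fv (\<lambda>i. Dn ws (Ps i))"
  by (induction ws) (simp_all add: ddir_fv)

lemma smooth_fv: "smooth (fv Ps)"
  unfolding smooth_def nderiv_fv differentiable_def using fv_deriv by blast

lemma smooth_pf: "smooth (pf P)"
  unfolding smooth_def nderiv_pf differentiable_def using pf_deriv by blast


lemma mem_D: "y \<in># D w P \<longleftrightarrow> (\<exists>c B i. (c,B) \<in># P \<and> i \<in># B \<and> y = (c * w $ i, B - {#i#}))"
  unfolding D_def by force

lemma Dn_props:
  assumes "\<forall>w\<in>set L. \<forall>i\<in>#A. w $ i \<ge> 0"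
  shows "(\<forall>c B. (c,B) \<in># Dn L {#(1,A)#} \<longrightarrow> c \<ge> 0 \<and> B \<subseteq># A) \<and>
         (\<forall>B. (\<exists>c>0. (c,B) \<in># Dn L {#(1,A)#}) \<longleftrightarrow>
              (\<exists>ks. length ks = length L \<and> mset ks + B = A \<and> (\<forall>j<length L. L!j $ (ks!j) > 0)))"
  using assms
proof (induction L)
  case Nil
  then show ?case by auto
next
  case (Cons w L)
  then have IH1: "\<And>c B. (c,B) \<in># Dn L {#(1,A)#} \<Longrightarrow> c \<ge> 0 \<and> B \<subseteq># A"
    and IH2: "\<And>B. (\<exists>c>0. (c,B) \<in># Dn L {#(1,A)#}) \<longleftrightarrow>
              (\<exists>ks. length ks = length L \<and> mset ks + B = A \<and> (\<forall>j<length L. L!j $ (ks!j) > 0))"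
    and wnn: "\<And>i. i \<in># A \<Longrightarrow> w $ i \<ge> 0"
    by auto
  have P1: "c \<ge> 0 \<and> B \<subseteq># A" if m: "(c,B) \<in># Dn (w # L) {#(1,A)#}" for c B
  proof -
    obtain c0 B0 i where h: "(c0,B0) \<in># Dn L {#(1,A)#}" "i \<in># B0" "(c,B) = (c0 * w $ i, B0 - {#i#})"
      using m unfolding Dn.simps mem_D by blast
    have hc: "c = c0 * w $ i" and hB: "B = B0 - {#i#}" using h(3) by simp_all
    have "c0 \<ge> 0" "B0 \<subseteq># A" using IH1[OF h(1)] by auto
    moreover have "i \<in># A" using h(2) \<open>B0 \<subseteq># A\<close> by (simp add: mset_subset_eqD)
    ultimately show ?thesis unfolding hc hB using wnn
      by (simp add: subset_mset.order_trans[OF diff_subset_eq_self])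
  qed
  have P2: "(\<exists>c>0. (c,B) \<in># Dn (w # L) {#(1,A)#}) \<longleftrightarrow>
              (\<exists>ks. length ks = length (w # L) \<and> mset ks + B = A \<and> (\<forall>j<length (w # L). (w # L)!j $ (ks!j) > 0))" for B
  proof
    assume "\<exists>c>0. (c,B) \<in># Dn (w # L) {#(1,A)#}"
    then obtain c c0 B0 i where h: "c > 0" "(c0,B0) \<in># Dn L {#(1,A)#}" "i \<in># B0" "c = c0 * w $ i" "B = B0 - {#i#}"
      unfolding Dn.simps mem_D by blast
    have "c0 \<ge> 0" "B0 \<subseteq># A" using IH1[OF h(2)] by auto
    moreover have "i \<in># A" using h(3) \<open>B0 \<subseteq># A\<close> by (simp add: mset_subset_eqD)
    ultimately have "c0 \<ge> 0" "w $ i \<ge> 0" "0 < c0 * w $ i" using h(1,4) wnn by auto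
    then have pos: "c0 > 0" "w $ i > 0" by (auto simp: zero_less_mult_iff)
    then obtain ks where ks: "length ks = length L" "mset ks + B0 = A" "\<forall>j<length L. L!j $ (ks!j) > 0"
      using IH2[of B0] h(2) by blast
    have "mset (i # ks) + B = add_mset i (mset ks) + (B0 - {#i#})" by (simp add: h(5))
    also have "\<dots> = mset ks + add_mset i (B0 - {#i#})" by simp
    also have "\<dots> = mset ks + B0" by (simp only: insert_DiffM[OF h(3)])
    finally have "mset (i # ks) + B = A" using ks(2) by simp
    moreover have "\<forall>j<length (w # L). (w # L)!j $ ((i#ks)!j) > 0"
    proof (intro allI impI)
      fix j assume "j < length (w # L)"
      then show "(w # L)!j $ ((i#ks)!j) > 0" using ks(3) pos(2) by (cases j) auto
    qed
    ultimately show "\<exists>ks. length ks = length (w # L) \<and> mset ks + B = A \<and> (\<forall>j<length (w # L). (w # L)!j $ (ks!j) > 0)"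
      using ks(1) by (intro exI[of _ "i # ks"]) simp
  next
    assume "\<exists>ks. length ks = length (w # L) \<and> mset ks + B = A \<and> (\<forall>j<length (w # L). (w # L)!j $ (ks!j) > 0)"
    then obtain ks0 where ks0: "length ks0 = length (w # L)" "mset ks0 + B = A"
       "\<forall>j<length (w # L). (w # L)!j $ (ks0!j) > 0" by blast
    then obtain i ks where ks0e: "ks0 = i # ks" by (cases ks0) auto
    have kl: "length ks = length L" using ks0(1) ks0e by simp
    have wi: "w $ i > 0" using ks0(3)[rule_format, of 0] ks0e by simp
    have "\<forall>j<length L. L!j $ (ks!j) > 0"
    proof (intro allI impI)
      fix j assume "j < length L"
      then show "L!j $ (ks!j) > 0" using ks0(3)[rule_format, of "Suc j"] ks0e by simp
    qed
    moreover have "mset ks + add_mset i B = A" using ks0(2) ks0e by simp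
    ultimately obtain c0 where c0: "c0 > 0" "(c0, add_mset i B) \<in># Dn L {#(1,A)#}"
      using IH2[of "add_mset i B"] kl by blast
    have "(c0 * w $ i, B) \<in># Dn (w # L) {#(1,A)#}"
      unfolding Dn.simps mem_D using c0(2)
      by (intro exI[of _ c0] exI[of _ "add_mset i B"] exI[of _ i]) simp
    then show "\<exists>c>0. (c,B) \<in># Dn (w # L) {#(1,A)#}" using c0(1) wi by (meson mult_pos_pos)
  qed
  show ?case using P1 P2 by blast
qed



lemma mon_zero: "mon B 0 = (if B = {#} then 1 else 0)"
proof (cases B)
  case empty then show ?thesis by (simp add: mon_def)
next
  case (add i B') then show ?thesis by (simp add: mon_def)
qed

lemma summset_pos:
  fixes f :: "'a \<Rightarrow> real"
  assumes "\<forall>x\<in>#M. f x \<ge> 0"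
  shows "0 \<le> sum_mset (image_mset f M) \<and> (0 < sum_mset (image_mset f M) \<longleftrightarrow> (\<exists>x\<in>#M. f x > 0))"
  using assms
proof (induction M)
  case empty then show ?case by simp
next
  case (add a M)
  then have "f a \<ge> 0" "0 \<le> sum_mset (image_mset f M)"
    "(0 < sum_mset (image_mset f M) \<longleftrightarrow> (\<exists>x\<in>#M. f x > 0))" by auto
  then show ?case by auto
qed

lemma val:
  assumes "\<forall>w\<in>set L. \<forall>i\<in>#A. w $ i \<ge> 0"
  shows "pf (Dn L {#(1,A)#}) 0 \<ge> 0 \<and> (pf (Dn L {#(1,A)#}) 0 > 0 \<longleftrightarrow>
     (\<exists>ks. length ks = length L \<and> mset ks = A \<and> (\<forall>j<length L. L!j $ (ks!j) > 0)))"
proof -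
  let ?Q = "Dn L {#(1,A)#}"
  let ?f = "\<lambda>(c,B). c * (if B = {#} then 1 else (0::real))"
  have pfe: "pf ?Q 0 = sum_mset (image_mset ?f ?Q)"
    unfolding pf_def by (intro arg_cong[where f=sum_mset] image_mset_cong) (auto simp: mon_zero)
  note DP = Dn_props[OF assms]
  have nn: "\<forall>x\<in>#?Q. ?f x \<ge> 0" using DP by auto
  have "(\<exists>x\<in>#?Q. ?f x > 0) \<longleftrightarrow> (\<exists>c>0. (c,{#}) \<in># ?Q)"
  proof
    assume "\<exists>x\<in>#?Q. ?f x > 0"
    then obtain c B where "(c,B) \<in># ?Q" "?f (c,B) > 0" by auto
    then show "\<exists>c>0. (c,{#}) \<in># ?Q" by (cases "B = {#}") auto
  next
    assume "\<exists>c>0. (c,{#}) \<in># ?Q"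
    then show "\<exists>x\<in>#?Q. ?f x > 0" by force
  qed
  also have "\<dots> \<longleftrightarrow> (\<exists>ks. length ks = length L \<and> mset ks = A \<and> (\<forall>j<length L. L!j $ (ks!j) > 0))"
    using DP by simp
  finally show ?thesis using summset_pos[OF nn] unfolding pfe by blast
qed

primrec subtrees :: "tree \<Rightarrow> tree set" where
  "subtrees (Node M) = insert (Node M) (\<Union> (set_mset (image_mset subtrees M)))"

primrec children :: "tree \<Rightarrow> tree multiset" where
  "children (Node M) = M"

lemma self_subtree: "t \<in> subtrees t" by (cases t) simp

lemma finite_subtrees: "finite (subtrees t)"
  by (induction t) auto

lemma card_Union_mset: "card (\<Union> (set_mset (image_mset g M))) \<le> sum_mset (image_mset (\<lambda>x. card (g x)) M)"
proof (induction M)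
  case empty then show ?case by simp
next
  case (add a M)
  have "card (\<Union> (set_mset (image_mset g (add_mset a M)))) = card (g a \<union> \<Union> (set_mset (image_mset g M)))"
    by simp
  also have "\<dots> \<le> card (g a) + card (\<Union> (set_mset (image_mset g M)))" by (rule card_Un_le)
  finally show ?case using add.IH by simp
qed

lemma card_subtrees: "card (subtrees t) \<le> tsize t"
proof (induction t)
  case (Node M)
  have "card (subtrees (Node M)) \<le> 1 + card (\<Union> (set_mset (image_mset subtrees M)))"
    by (simp add: card_insert_le_m1 card_insert_if)
  also have "\<dots> \<le> 1 + sum_mset (image_mset (\<lambda>x. card (subtrees x)) M)"
    using card_Union_mset[of subtrees M] by simp
  also have "\<dots> \<le> 1 + sum_mset (image_mset tsize M)"
    using Node.IH by (simp add: sum_mset_mono)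
  finally show ?case by simp
qed

lemma subtree_closed: "s \<in> subtrees t \<Longrightarrow> c \<in># children s \<Longrightarrow> c \<in> subtrees t"
proof (induction t)
  case (Node M)
  show ?case
  proof (cases "s = Node M")
    case True
    then have "c \<in># M" using Node.prems by simp
    then show ?thesis using self_subtree[of c] by auto
  next
    case False
    then obtain t where "t \<in># M" "s \<in> subtrees t" using Node.prems by auto
    then show ?thesis using Node.IH Node.prems by auto
  qed
qed



lemma mset_map_obtain: "mset L = image_mset g N \<Longrightarrow> \<exists>ts. mset ts = N \<and> L = map g ts"
proof (induction L arbitrary: N)
  case Nil then show ?case by simp
next
  case (Cons x L)
  then have "x \<in># image_mset g N" by (metis list.set_intros(1) set_mset_mset)
  then obtain t where t: "t \<in># N" "x = g t" by auto
  have h: "add_mset (g t) (mset L) = image_mset g N" using Cons.prems t(2) by simp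
  then have "mset L = image_mset g N - {#g t#}" by (metis add_mset_remove_trivial)
  also have "\<dots> = image_mset g (N - {#t#})" by (simp add: image_mset_Diff t(1))
  finally have "mset L = image_mset g (N - {#t#})" .
  then obtain ts where "mset ts = N - {#t#}" "L = map g ts" using Cons.IH by blast
  then show ?case using t by (intro exI[of _ "t # ts"]) simp
qed

lemma sum_pos_iff:
  fixes V :: "'a \<Rightarrow> real"
  assumes "finite P" "\<forall>x\<in>P. V x \<ge> 0"
  shows "0 \<le> sum V P \<and> (0 < sum V P \<longleftrightarrow> (\<exists>x\<in>P. V x > 0))"
proof -
  have nn: "\<And>x. x \<in> P \<Longrightarrow> 0 \<le> V x" using assms(2) by blast
  show ?thesis using sum_nonneg_eq_0_iff[OF assms(1) nn] sum_nonneg[of P V, OF nn] nn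
    by (auto simp: less_le)
qed

lemma key:
  fixes idx :: "tree \<Rightarrow> 'n::finite" and Ps :: "'n \<Rightarrow> (real \<times> 'n multiset) multiset"
  assumes inj: "inj_on idx S" and cl: "\<And>s c. s \<in> S \<Longrightarrow> c \<in># children s \<Longrightarrow> c \<in> S"
  and Ps: "\<And>s. s \<in> S \<Longrightarrow> Ps (idx s) = {#(1, image_mset idx (children s))#}"
  shows "\<forall>s\<in>S. 0 \<le> elem_diff \<tau> (fv Ps) 0 $ idx s \<and> (0 < elem_diff \<tau> (fv Ps) 0 $ idx s \<longleftrightarrow> \<tau> = s)"
proof (induction \<tau>)
  case (Node N)
  let ?g = "\<lambda>t. elem_diff t (fv Ps) 0"
  show ?case
  proof
    fix s assume sS: "s \<in> S"
    let ?A = "image_mset idx (children s)"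
    let ?P = "permutations_of_multiset (image_mset ?g N)"
    let ?V = "\<lambda>L. pf (Dn L {#(1, ?A)#}) 0"
    have e: "?g (Node N) $ idx s = (1 / real (card ?P)) * sum ?V ?P"
      by (simp add: mderiv_def nderiv_fv fv_def Ps[OF sS])
    have VL: "0 \<le> ?V L \<and> (0 < ?V L \<longleftrightarrow> Node N = s)" if L: "L \<in> ?P" for L
    proof -
      have mL: "mset L = image_mset ?g N" using L by (rule permutations_of_multisetD)
      then obtain ts where ts: "mset ts = N" "L = map ?g ts" using mset_map_obtain by blast
      have tsS: "ts ! j \<in># N" if "j < length ts" for j using that ts(1) by (metis nth_mem set_mset_mset)
      have nn: "\<forall>w\<in>set L. \<forall>i\<in>#?A. w $ i \<ge> 0"
      proof (intro ballI)
        fix w i assume w: "w \<in> set L" and i: "i \<in># ?A"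
        obtain t where t: "t \<in># N" "w = ?g t" using w ts by auto
        obtain c where c: "c \<in># children s" "i = idx c" using i by auto
        show "w $ i \<ge> 0" using Node.IH[OF t(1)] cl[OF sS c(1)] t(2) c(2) by blast
      qed
      have "(\<exists>ks. length ks = length L \<and> mset ks = ?A \<and> (\<forall>j<length L. L!j $ (ks!j) > 0)) \<longleftrightarrow> Node N = s"
      proof
        assume "\<exists>ks. length ks = length L \<and> mset ks = ?A \<and> (\<forall>j<length L. L!j $ (ks!j) > 0)"
        then obtain ks where ks: "length ks = length L" "mset ks = ?A" "\<forall>j<length L. L!j $ (ks!j) > 0"
          by blast
        let ?cs = "map (inv_into S idx) ks"
        have chS: "set_mset (children s) \<subseteq> S" using cl[OF sS] by blast
        have "ts = ?cs"
        proof (rule nth_equalityI)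
          show "length ts = length ?cs" using ks(1) ts(2) by simp
        next
          fix j assume j: "j < length ts"
          have "ks ! j \<in># ?A" using ks(1,2) j ts(2) by (metis length_map nth_mem set_mset_mset)
          then obtain c where c: "c \<in># children s" "ks ! j = idx c" by auto
          have cS: "c \<in> S" using cl[OF sS c(1)] .
          have inv: "inv_into S idx (ks ! j) = c" using c(2) inv_into_f_f[OF inj cS] by simp
          from ks(3)[rule_format, of j] j ts(2) have "0 < ?g (ts ! j) $ (ks ! j)" by simp
          then have "0 < ?g (ts ! j) $ idx c" by (simp only: c(2))
          then have "ts ! j = c" using Node.IH[OF tsS[OF j]] cS by blast
          then show "ts ! j = ?cs ! j" using inv j ks(1) ts(2) by simp
        qed
        then have "N = image_mset (inv_into S idx) ?A" using ks(2) ts(1) by simp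
        also have "\<dots> = image_mset (\<lambda>c. c) (children s)"
          unfolding multiset.map_comp o_def
          by (rule image_mset_cong) (use inj chS in \<open>auto intro: inv_into_f_f\<close>)
        finally show "Node N = s" by (cases s) simp
      next
        assume NS: "Node N = s"
        have chS: "c \<in> S" if "c \<in># N" for c using cl[OF sS] NS that by auto
        show "\<exists>ks. length ks = length L \<and> mset ks = ?A \<and> (\<forall>j<length L. L!j $ (ks!j) > 0)"
        proof (intro exI[of _ "map idx ts"] conjI allI impI)
          show "length (map idx ts) = length L" using ts(2) by simp
          show "mset (map idx ts) = ?A" using ts(1) NS by auto
          fix j assume j: "j < length L"
          then have jt: "j < length ts" using ts(2) by simp
          show "L!j $ (map idx ts ! j) > 0"
            using Node.IH[OF tsS[OF jt]] chS[OF tsS[OF jt]] jt ts(2) by simp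
        qed
      qed
      then show ?thesis using val[OF nn] by simp
    qed
    have fin: "finite ?P" by simp
    have ne: "?P \<noteq> {}" by simp
    have cp: "card ?P > 0" using fin ne by (simp add: card_gt_0_iff)
    have S1: "0 \<le> sum ?V ?P \<and> (0 < sum ?V ?P \<longleftrightarrow> (\<exists>L\<in>?P. ?V L > 0))"
      by (rule sum_pos_iff) (use fin VL in auto)
    have S2: "(\<exists>L\<in>?P. ?V L > 0) \<longleftrightarrow> Node N = s" using VL ne by blast
    show "0 \<le> ?g (Node N) $ idx s \<and> (0 < ?g (Node N) $ idx s \<longleftrightarrow> Node N = s)"
    proof -
      have S3: "0 \<le> sum ?V ?P" "0 < sum ?V ?P \<longleftrightarrow> Node N = s" using S1 S2 by blast+
      have cpr: "0 < real (card ?P)" using cp by simp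
      show ?thesis unfolding e using S3 cpr
        by (simp add: zero_less_divide_iff zero_le_divide_iff)
    qed
  qed
qed



lemma hess_pf: "hessian (pf {#(1, {#p, q#})#}) a b = a $ p * b $ q + a $ q * b $ p"
  unfolding hessian_def nderiv_pf by (simp add: mon_def algebra_simps)

lemma quad_pf: "quadratic_functional (pf {#(1, {#p, q#})#} :: real ^ 'n::finite \<Rightarrow> real)"
  unfolding quadratic_functional_def
proof (intro exI[of _ "\<lambda>i j. if i = p \<and> j = q then 1 else 0"] allI)
  fix y :: "real ^ 'n"
  have "(\<Sum>i\<in>UNIV. \<Sum>j\<in>UNIV. (if i = p \<and> j = q then 1 else 0) * y $ i * y $ j)
      = (\<Sum>i\<in>UNIV. if i = p then y $ p * y $ q else 0)"
    by (intro sum.cong refl) (auto simp: if_distrib[of "\<lambda>x. x * _"] sum.delta cong: if_cong)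
  also have "\<dots> = y $ p * y $ q" by simp
  finally show "pf {#(1, {#p, q#})#} y = (\<Sum>i\<in>UNIV. \<Sum>j\<in>UNIV. (if i = p \<and> j = q then 1 else 0) * y $ i * y $ j)"
    by (simp add: mon_def)
qed

lemma final_arith:
  fixes ap aq bp bq :: real
  assumes "ap \<ge> 0" "aq \<ge> 0" "bp \<ge> 0" "bq \<ge> 0"
  shows "ap * bq + aq * bp \<noteq> 0 \<longleftrightarrow> (ap > 0 \<and> bq > 0) \<or> (aq > 0 \<and> bp > 0)"
proof -
  have "ap * bq \<ge> 0" "aq * bp \<ge> 0" using assms by simp_all
  then show ?thesis using assms
    by (smt (verit) mult_eq_0_iff mult_pos_pos)
qed

theorem lemmaA2:
  fixes u v :: tree
  assumes "CARD('n::finite) = tsize u + tsize v"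
  shows "\<exists>(f :: real ^ 'n \<Rightarrow> real ^ 'n) (F :: real ^ 'n \<Rightarrow> real).
           smooth f \<and> quadratic_functional F \<and>
           (\<forall>\<tau> \<theta>. (hessian F (elem_diff \<tau> f 0) (elem_diff \<theta> f 0) \<noteq> 0
                    \<longleftrightarrow> ((\<tau>, \<theta>) = (u, v) \<or> (\<tau>, \<theta>) = (v, u))))"
proof -
  define S where "S = subtrees u \<union> subtrees v"
  have finS: "finite S" unfolding S_def by (simp add: finite_subtrees)
  have "card S \<le> card (subtrees u) + card (subtrees v)" unfolding S_def by (rule card_Un_le)
  also have "\<dots> \<le> tsize u + tsize v" using card_subtrees[of u] card_subtrees[of v] by simp
  finally have cardS: "card S \<le> card (UNIV :: 'n set)" using assms by simp
  then obtain idx :: "tree \<Rightarrow> 'n" where inj: "inj_on idx S"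
    using card_le_inj[OF finS _ cardS] by auto
  have cl: "\<And>s c. s \<in> S \<Longrightarrow> c \<in># children s \<Longrightarrow> c \<in> S"
    unfolding S_def using subtree_closed by blast
  define Ps where "Ps i = (if i \<in> idx ` S then {#(1::real, image_mset idx (children (inv_into S idx i)))#} else {#})" for i
  have Ps: "\<And>s. s \<in> S \<Longrightarrow> Ps (idx s) = {#(1, image_mset idx (children s))#}"
    unfolding Ps_def using inj by (simp add: inv_into_f_f)
  have K: "\<And>\<tau>. \<forall>s\<in>S. 0 \<le> elem_diff \<tau> (fv Ps) 0 $ idx s \<and> (0 < elem_diff \<tau> (fv Ps) 0 $ idx s \<longleftrightarrow> \<tau> = s)"
  proof (rule key[where idx=idx and S=S and Ps=Ps])
    show "inj_on idx S" by (rule inj)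
    show "\<And>s c. s \<in> S \<Longrightarrow> c \<in># children s \<Longrightarrow> c \<in> S" by (rule cl)
    show "\<And>s. s \<in> S \<Longrightarrow> Ps (idx s) = {#(1, image_mset idx (children s))#}" by (rule Ps)
  qed
  have uS: "u \<in> S" and vS: "v \<in> S" unfolding S_def by (simp_all add: self_subtree)
  define f where "f = fv Ps"
  define F :: "real ^ 'n \<Rightarrow> real" where "F = pf {#(1, {#idx u, idx v#})#}"
  have "\<forall>\<tau> \<theta>. (hessian F (elem_diff \<tau> f 0) (elem_diff \<theta> f 0) \<noteq> 0
                    \<longleftrightarrow> ((\<tau>, \<theta>) = (u, v) \<or> (\<tau>, \<theta>) = (v, u)))"
  proof (intro allI)
    fix \<tau> \<theta>
    have a1: "0 \<le> elem_diff \<tau> f 0 $ idx u" "(0 < elem_diff \<tau> f 0 $ idx u) = (\<tau> = u)"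
      using K[where \<tau>=\<tau>] uS unfolding f_def by blast+
    have a2: "0 \<le> elem_diff \<tau> f 0 $ idx v" "(0 < elem_diff \<tau> f 0 $ idx v) = (\<tau> = v)"
      using K[where \<tau>=\<tau>] vS unfolding f_def by blast+
    have b1: "0 \<le> elem_diff \<theta> f 0 $ idx u" "(0 < elem_diff \<theta> f 0 $ idx u) = (\<theta> = u)"
      using K[where \<tau>=\<theta>] uS unfolding f_def by blast+
    have b2: "0 \<le> elem_diff \<theta> f 0 $ idx v" "(0 < elem_diff \<theta> f 0 $ idx v) = (\<theta> = v)"
      using K[where \<tau>=\<theta>] vS unfolding f_def by blast+
    show "(hessian F (elem_diff \<tau> f 0) (elem_diff \<theta> f 0) \<noteq> 0
                    \<longleftrightarrow> ((\<tau>, \<theta>) = (u, v) \<or> (\<tau>, \<theta>) = (v, u)))"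
      unfolding F_def hess_pf final_arith[OF a1(1) a2(1) b1(1) b2(1)] a1(2) a2(2) b1(2) b2(2)
      by auto
  qed
  moreover have "smooth f" unfolding f_def by (rule smooth_fv)
  moreover have "quadratic_functional F" unfolding F_def by (rule quad_pf)
  ultimately show ?thesis by blast
qed


end
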